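(* Let $Y$ be a nonnegative random variable with mean $\mu$ and variance $\sigma^2$, both finite and positive, and let $Y^s$ be defined on the same probability space as $Y$, have the $Y$-size bias distribution, and satisfy $Y^s\ge Y$ with probability one. Let $W=(Y-\mu)/\sigma$ and $W^s=(Y^s-\mu)/\sigma$. Then for any $z\in\mathbb{R}$ and $a>0$, $$\frac{\mu}{\sigma}E\left[(W^s-W)\mathbf{1}_{\{W^s-W\le a\}}\mathbf{1}_{\{z\le W\le z+a\}}\right]\le a.$$
   Context: For a nonnegative random variable $Y$ with finite positive mean $\mu$, a random variable $Y^s$ has the $Y$-size bias distribution if $E[Yg(Y)]=\mu E[g(Y^s)]$ for all bounded continuous functions $g$. *)

theory Defs
  imports "HOL-Probability.Probability"
begin

definition size_bias :: "'a measure \<Rightarrow> ('a \<Rightarrow> real) \<Rightarrow> ('a \<Rightarrow> real) \<Rightarrow> bool" where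
  "size_bias M Y Ys \<longleftrightarrow>
     (\<forall>g :: real \<Rightarrow> real. continuous_on UNIV g \<and> bounded (range g) \<longrightarrow>
        (\<integral>x. Y x * g (Y x) \<partial>M) = (\<integral>x. Y x \<partial>M) * (\<integral>x. g (Ys x) \<partial>M))"

end

theory Submission
  imports Defs
begin

theorem lemma2p1:
  fixes M :: "'a measure" and Y Ys :: "'a \<Rightarrow> real" and z a :: real
  assumes "prob_space M"
    and "Y \<in> borel_measurable M" and "Ys \<in> borel_measurable M"
    and "AE x in M. 0 \<le> Y x"
    and "integrable M Y" and "integrable M (\<lambda>x. (Y x)\<^sup>2)"
    and "(\<integral>x. Y x \<partial>M) > 0"
    and "prob_space.variance M Y > 0"
    and "size_bias M Y Ys"
    and "AE x in M. Y x \<le> Ys x"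
    and "a > 0"
  shows "let \<mu> = (\<integral>x. Y x \<partial>M); \<sigma> = sqrt (prob_space.variance M Y);
             W = (\<lambda>x. (Y x - \<mu>) / \<sigma>); Ws = (\<lambda>x. (Ys x - \<mu>) / \<sigma>)
         in \<mu> / \<sigma> * (\<integral>x. (Ws x - W x) * indicator {t. Ws t - W t \<le> a} x
                         * indicator {t. z \<le> W t \<and> W t \<le> z + a} x \<partial>M) \<le> a"
proof -
  interpret P: prob_space M by (rule assms(1))
  define \<mu> where "\<mu> = (\<integral>x. Y x \<partial>M)"
  define V where "V = P.variance Y"
  define \<sigma> where "\<sigma> = sqrt V"
  define W where "W = (\<lambda>x. (Y x - \<mu>) / \<sigma>)"
  define Ws where "Ws = (\<lambda>x. (Ys x - \<mu>) / \<sigma>)"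
  define h where "h = (\<lambda>x. (Ws x - W x) * indicator {t. Ws t - W t \<le> a} x
                         * indicator {t. z \<le> W t \<and> W t \<le> z + a} x)"
  define f where "f = (\<lambda>w::real. max (-a) (min a (w - z - a)))"
  have mu: "\<mu> > 0" using assms(7) \<mu>_def by simp
  have Vpos: "V > 0" using assms(8) V_def by simp
  have sig: "\<sigma> > 0" using Vpos \<sigma>_def by simp
  have sig2: "\<sigma>^2 = V" using Vpos \<sigma>_def by simp
  have fmono: "\<And>u v. u \<le> v \<Longrightarrow> f u \<le> f v" unfolding f_def by auto
  have fbd: "\<And>w. \<bar>f w\<bar> \<le> a" unfolding f_def using assms(11) by auto
  have fcont: "continuous_on UNIV f" unfolding f_def by (intro continuous_intros)
  have fmeas: "f \<in> borel_measurable borel" using fcont by (simp add: borel_measurable_continuous_onI)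
  have Wm: "W \<in> borel_measurable M" unfolding W_def using assms(2) by measurable
  have Wsm: "Ws \<in> borel_measurable M" unfolding Ws_def using assms(3) by measurable
  have fWm: "(\<lambda>x. f (W x)) \<in> borel_measurable M" using fmeas Wm by measurable
  have fWsm: "(\<lambda>x. f (Ws x)) \<in> borel_measurable M" using fmeas Wsm by measurable
  have ifW: "integrable M (\<lambda>x. f (W x))"
    by (rule P.integrable_const_bound[where B=a]) (use fbd fWm in auto)
  have ifWs: "integrable M (\<lambda>x. f (Ws x))"
    by (rule P.integrable_const_bound[where B=a]) (use fbd fWsm in auto)
  have iY: "integrable M Y" by fact
  have iYc: "integrable M (\<lambda>x. Y x - \<mu>)" using iY by simp
  have iYf: "integrable M (\<lambda>x. Y x * f (W x))"
    by (rule Bochner_Integration.integrable_bound[OF integrable_mult_right[OF iY, of a]])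
       (use fWm assms(2) fbd assms(11) in \<open>auto simp: abs_mult mult.commute[of a] intro!: mult_left_mono\<close>)
  have iabs: "integrable M (\<lambda>x. \<bar>Y x - \<mu>\<bar>)" using iYc by simp
  have sb: "(\<integral>x. Y x * f (W x) \<partial>M) = \<mu> * (\<integral>x. f (Ws x) \<partial>M)"
  proof -
    define g where "g = (\<lambda>y. f ((y - \<mu>) / \<sigma>))"
    have gc: "continuous_on UNIV g" unfolding g_def f_def using sig by (intro continuous_intros) auto
    have gb: "bounded (range g)" unfolding bounded_iff using fbd g_def by auto
    have "(\<integral>x. Y x * g (Y x) \<partial>M) = \<mu> * (\<integral>x. g (Ys x) \<partial>M)"
      using assms(9) gc gb unfolding size_bias_def \<mu>_def by blast
    then show ?thesis by (simp add: g_def W_def Ws_def)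
  qed
  have absle: "(\<integral>x. \<bar>Y x - \<mu>\<bar> \<partial>M) \<le> \<sigma>"
  proof -
    have isq: "integrable M (\<lambda>x. (Y x - \<mu>)^2)"
      using assms(6) iY by (simp add: power2_diff)
    have isq': "integrable M (\<lambda>x. \<bar>Y x - \<mu>\<bar>^2)" using isq by simp
    have "0 \<le> P.variance (\<lambda>x. \<bar>Y x - \<mu>\<bar>)" by (rule P.variance_positive)
    also have "\<dots> = (\<integral>x. \<bar>Y x - \<mu>\<bar>^2 \<partial>M) - (\<integral>x. \<bar>Y x - \<mu>\<bar> \<partial>M)^2"
      by (rule P.variance_eq[OF iabs isq'])
    also have "(\<integral>x. \<bar>Y x - \<mu>\<bar>^2 \<partial>M) = V" unfolding V_def \<mu>_def by simp
    finally have "(\<integral>x. \<bar>Y x - \<mu>\<bar> \<partial>M)^2 \<le> \<sigma>^2" using sig2 by simp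
    then show ?thesis using sig by (meson power2_le_imp_le less_imp_le)
  qed
  have main: "\<mu> / \<sigma> * (\<integral>x. h x \<partial>M) \<le> a"
  proof (cases "integrable M h")
    case False
    then show ?thesis using assms(11) by (simp add: not_integrable_integral_eq)
  next
    case True
    have AEh: "AE x in M. h x \<le> f (Ws x) - f (W x)"
      using assms(10)
    proof eventually_elim
      case (elim x)
      have ge: "W x \<le> Ws x" using elim sig unfolding W_def Ws_def by (simp add: divide_right_mono)
      show ?case
      proof (cases "Ws x - W x \<le> a \<and> z \<le> W x \<and> W x \<le> z + a")
        case True
        then have "f (Ws x) = Ws x - z - a" "f (W x) = W x - z - a"
          using ge unfolding f_def by auto
        then show ?thesis using True unfolding h_def by simp
      next
        case False
        then have "h x = 0" unfolding h_def by (auto simp: indicator_def)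
        then show ?thesis using fmono[OF ge] by simp
      qed
    qed
    have "(\<integral>x. h x \<partial>M) \<le> (\<integral>x. f (Ws x) - f (W x) \<partial>M)"
      by (rule integral_mono_AE[OF True _ AEh]) (use ifW ifWs in simp)
    then have "\<mu> / \<sigma> * (\<integral>x. h x \<partial>M) \<le> \<mu> / \<sigma> * (\<integral>x. f (Ws x) - f (W x) \<partial>M)"
      using mu sig by (intro mult_left_mono) auto
    also have "\<mu> * (\<integral>x. f (Ws x) - f (W x) \<partial>M) = (\<integral>x. (Y x - \<mu>) * f (W x) \<partial>M)"
    proof -
      have "\<mu> * (\<integral>x. f (Ws x) - f (W x) \<partial>M) = \<mu> * (\<integral>x. f (Ws x) \<partial>M) - \<mu> * (\<integral>x. f (W x) \<partial>M)"
        using ifW ifWs by (simp add: right_diff_distrib)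
      also have "\<dots> = (\<integral>x. Y x * f (W x) \<partial>M) - (\<integral>x. \<mu> * f (W x) \<partial>M)"
        using sb by simp
      also have "\<dots> = (\<integral>x. Y x * f (W x) - \<mu> * f (W x) \<partial>M)"
        using iYf ifW by simp
      finally show ?thesis by (simp add: left_diff_distrib)
    qed
    then have "\<mu> / \<sigma> * (\<integral>x. f (Ws x) - f (W x) \<partial>M) = (\<integral>x. (Y x - \<mu>) * f (W x) \<partial>M) / \<sigma>"
      by (metis times_divide_eq_left divide_mult_eq mult.commute)
    also have "(\<integral>x. (Y x - \<mu>) * f (W x) \<partial>M) \<le> (\<integral>x. a * \<bar>Y x - \<mu>\<bar> \<partial>M)"
    proof (rule integral_mono)
      show "integrable M (\<lambda>x. (Y x - \<mu>) * f (W x))"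
        using iYf ifW by (simp add: left_diff_distrib)
      show "integrable M (\<lambda>x. a * \<bar>Y x - \<mu>\<bar>)" using iabs by simp
      fix x
      have "(Y x - \<mu>) * f (W x) \<le> \<bar>Y x - \<mu>\<bar> * \<bar>f (W x)\<bar>" by (metis abs_ge_self abs_mult)
      also have "\<dots> \<le> \<bar>Y x - \<mu>\<bar> * a" using fbd by (simp add: mult_left_mono)
      finally show "(Y x - \<mu>) * f (W x) \<le> a * \<bar>Y x - \<mu>\<bar>" by (simp add: mult.commute)
    qed
    then have "(\<integral>x. (Y x - \<mu>) * f (W x) \<partial>M) / \<sigma> \<le> (\<integral>x. a * \<bar>Y x - \<mu>\<bar> \<partial>M) / \<sigma>"
      using sig by (simp add: divide_right_mono)
    also have "(\<integral>x. a * \<bar>Y x - \<mu>\<bar> \<partial>M) / \<sigma> = a * ((\<integral>x. \<bar>Y x - \<mu>\<bar> \<partial>M) / \<sigma>)" by simp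
    also have "\<dots> \<le> a * 1"
      using absle sig assms(11) by (intro mult_left_mono) (auto simp: divide_le_eq)
    finally show ?thesis by simp
  qed
  show ?thesis unfolding Let_def using main
    by (simp add: h_def W_def Ws_def \<mu>_def \<sigma>_def V_def)
qed

end
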